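(* Let $k\geq 3$ be an integer and $\Sigma_k=\{\sigma_1,\ldots,\sigma_k\}$. Consider $r=k$ users over $\Sigma_k$, where for each $i\in[k]$ the confusion graph $G_i$ of user $i$ is a clique on $\Sigma_k\setminus\{\sigma_i\}$ (with $\sigma_i$ isolated). Then the rate vector $\left(\frac{\log_2 k}{k},\ldots,\frac{\log_2 k}{k}\right)$ is feasible.
   Context: Setting: a sender broadcasts a word of length $n$ over a finite alphabet $\Sigma$ to $r$ users; user $i$ has a confusion graph $G_i$ on vertex set $\Sigma$, where $ab$ is an edge iff user $i$ cannot distinguish letters $a$ and $b$. Two words $x,y\in\Sigma^n$ are distinguishable by user $i$ if there is a coordinate $t$ with $x_t\neq y_t$ and $x_ty_t$ not an edge of $G_i$. A vector $(m_1,\ldots,m_r)$ of positive integers is feasible for length $n$ if there is a map $E:[m_1]\times\cdots\times[m_r]\to\Sigma^n$ such that for every $i$ and all tuples $a,a'$ with $a_i\neq a'_i$, $E(a)$ and $E(a')$ are distinguishable by user $i$. A rate vector $(R_1,\ldots,R_r)$ is feasible if there is a sequence of feasible vectors for lengths $n\to\infty$ with $R_i=\lim_{n\to\infty}\frac{\log_2 m_i^{(n)}}{n}$ for all $i$. *)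

theory Defs
  imports Complex_Main "HOL-Library.FuncSet"
begin

text \<open>Words of length n over alphabet Alph are lists of length n with letters in Alph.
  Confusion graphs: G i a b holds iff user i cannot distinguish letters a and b.
  Users are indexed by 0..<r.\<close>

definition words :: "'a set \<Rightarrow> nat \<Rightarrow> 'a list set" where
  "words Alph n = {x. length x = n \<and> set x \<subseteq> Alph}"

definition distinguishable :: "('a \<Rightarrow> 'a \<Rightarrow> bool) \<Rightarrow> 'a list \<Rightarrow> 'a list \<Rightarrow> bool" where
  "distinguishable Gi x y \<longleftrightarrow>
     (\<exists>t < min (length x) (length y). x ! t \<noteq> y ! t \<and> \<not> Gi (x ! t) (y ! t))"

definition tuples :: "nat \<Rightarrow> (nat \<Rightarrow> nat) \<Rightarrow> (nat \<Rightarrow> nat) set" where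
  "tuples r m = PiE {..<r} (\<lambda>i. {..<m i})"

definition feasible_vector ::
  "'a set \<Rightarrow> nat \<Rightarrow> (nat \<Rightarrow> 'a \<Rightarrow> 'a \<Rightarrow> bool) \<Rightarrow> nat \<Rightarrow> (nat \<Rightarrow> nat) \<Rightarrow> bool" where
  "feasible_vector Alph r G n m \<longleftrightarrow>
     (\<forall>i<r. m i > 0) \<and>
     (\<exists>E. (\<forall>a\<in>tuples r m. E a \<in> words Alph n) \<and>
          (\<forall>i<r. \<forall>a\<in>tuples r m. \<forall>a'\<in>tuples r m.
              a i \<noteq> a' i \<longrightarrow> distinguishable (G i) (E a) (E a')))"

definition feasible_rate ::
  "'a set \<Rightarrow> nat \<Rightarrow> (nat \<Rightarrow> 'a \<Rightarrow> 'a \<Rightarrow> bool) \<Rightarrow> (nat \<Rightarrow> real) \<Rightarrow> bool" where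
  "feasible_rate Alph r G R \<longleftrightarrow>
     (\<exists>M :: nat \<Rightarrow> nat \<Rightarrow> nat.
        (\<forall>n. feasible_vector Alph r G n (M n)) \<and>
        (\<forall>i<r. (\<lambda>n. log 2 (real (M n i)) / real n) \<longlonglongrightarrow> R i))"

end

theory Submission
  imports Defs "HOL-Real_Asymp.Real_Asymp"
begin


lemma binom_step: "(N choose Suc j) * Suc j = (N choose j) * (N - j)"
proof (cases N)
  case 0 then show ?thesis by simp
next
  case (Suc n)
  have "(Suc n choose Suc j) * Suc j = Suc n * (n choose j)" by (rule Suc_times_binomial_eq[symmetric])
  also have "\<dots> = (Suc n - j) * (Suc n choose j)" using binomial_absorb_comp[of "Suc n" j] by simp
  finally show ?thesis using Suc by (simp add: mult.commute)
qed

lemma binom_term_le: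
  fixes N j m :: nat assumes m1: "m \<ge> 1" shows "(N choose j) * (m-1)^(N-j) \<le> m^N"
proof (cases "j \<le> N")
  case True
  have "m ^ N = (1 + (m-1))^N" if "m \<ge> 1" using that by simp
  have eq: "(1 + (m-1))^N = (\<Sum>i\<le>N. (N choose i) * (m-1)^(N-i))"
    using binomial[of 1 "m-1" N] by simp
  have "(N choose j) * (m-1)^(N-j) \<le> (\<Sum>i\<le>N. (N choose i) * (m-1)^(N-i))"
    using True by (intro member_le_sum) auto
  also have "\<dots> = (1 + (m-1))^N" using eq by simp
  also have "\<dots> \<le> m^N" using m1 by simp
  finally show ?thesis .
next
  case False then show ?thesis by (simp add: binomial_eq_0)
qed

lemma binom_mode:
  fixes m L j :: nat
  assumes m: "m \<ge> 1" and j: "j \<le> m*L"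
  shows "(m*L choose j) * (m-1)^(m*L-j) \<le> (m*L choose L) * (m-1)^(m*L-L)"
proof -
  define N where "N = m*L"
  define t where "t x = (N choose x) * (m-1)^(N-x)" for x
  have LN: "L \<le> N" using m unfolding N_def by simp
  have key: "(N choose Suc x) * Suc x = (N choose x) * (N - x)" for x by (rule binom_step)
  have asc: "t x \<le> t (Suc x)" if "x < L" for x
  proof -
    have xN: "x < N" using that LN by simp
    have e: "N - x = Suc (N - Suc x)" using xN by simp
    have "m * Suc x \<le> m * L" using that by (intro mult_le_mono2) simp
    moreover have "(m-1) * Suc x = m * Suc x - Suc x" using diff_mult_distrib[of m 1 "Suc x"] by simp
    ultimately have ineq: "(m-1) * Suc x \<le> N - x" unfolding N_def by linarith
    have "t x * Suc x = (N choose x) * ((m-1) * Suc x) * (m-1)^(N - Suc x)"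
      unfolding t_def e by (simp add: algebra_simps)
    also have "\<dots> \<le> (N choose x) * (N - x) * (m-1)^(N - Suc x)"
      using ineq by (intro mult_le_mono1 mult_le_mono2) 
    also have "\<dots> = ((N choose Suc x) * Suc x) * (m-1)^(N - Suc x)" by (simp only: key)
    also have "\<dots> = t (Suc x) * Suc x" unfolding t_def by (simp only: mult_ac)
    finally show ?thesis by (metis mult_le_cancel2 zero_less_Suc)
  qed
  have desc: "t (Suc x) \<le> t x" if "L \<le> x" "x < N" for x
  proof -
    have e: "N - x = Suc (N - Suc x)" using that by simp
    have "m * L \<le> m * x" using that by (intro mult_le_mono2) simp
    moreover have "(m-1) * Suc x = m * Suc x - Suc x" using diff_mult_distrib[of m 1 "Suc x"] by simp
    moreover have "m * Suc x = m + m*x" by simp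
    ultimately have ineq: "N - x \<le> (m-1) * Suc x" unfolding N_def using m by linarith
    have "t (Suc x) * Suc x = ((N choose Suc x) * Suc x) * (m-1)^(N - Suc x)"
      unfolding t_def by (simp only: mult_ac)
    also have "\<dots> = (N choose x) * (N - x) * (m-1)^(N - Suc x)" by (simp only: key)
    also have "\<dots> \<le> (N choose x) * ((m-1) * Suc x) * (m-1)^(N - Suc x)"
      using ineq by (intro mult_le_mono1 mult_le_mono2) 
    also have "\<dots> = t x * Suc x" unfolding t_def e by (simp add: algebra_simps)
    finally show ?thesis by (metis mult_le_cancel2 zero_less_Suc)
  qed
  have "t j \<le> t L"
  proof (cases "j \<le> L")
    case True
    show ?thesis using True
    proof (induction j rule: inc_induct)
      case base then show ?case by simp
    next
      case (step n) then show ?case using asc[of n] by simp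
    qed
  next
    case False
    then have "L \<le> j" by simp
    then show ?thesis
    proof (induction j rule: dec_induct)
      case base then show ?case by simp
    next
      case (step n) then show ?case using desc[of n] j unfolding N_def by simp
    qed
  qed
  then show ?thesis unfolding t_def N_def .
qed

lemma pow_le_mode:
  fixes K L :: nat
  shows "(Suc K)^(Suc K * L) \<le> (Suc K * L + 1) * ((Suc K * L choose L) * K^(K*L))"
proof -
  define N where "N = Suc K * L"
  have "(Suc K)^N = (1 + K)^N" by simp
  also have "\<dots> = (\<Sum>i\<le>N. (N choose i) * K^(N-i))"
    using binomial[of 1 K N] by simp
  also have "\<dots> \<le> (\<Sum>i\<le>N. (N choose L) * K^(N-L))"
  proof (rule sum_mono)
    fix i assume "i \<in> {..N}"
    then show "(N choose i) * K^(N-i) \<le> (N choose L) * K^(N-L)"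
      using binom_mode[of "Suc K" i L] unfolding N_def by simp
  qed
  also have "\<dots> = (N+1) * ((N choose L) * K^(N-L))" by simp
  finally show ?thesis unfolding N_def by simp
qed

lemma prod_lower: "K^(K*L) \<le> (\<Prod>m\<in>{1..K}. (m*L+1) * (m*L choose L))" for K L :: nat
proof (induction K)
  case 0 then show ?case by simp
next
  case (Suc K)
  have "(Suc K)^(Suc K * L) \<le> (Suc K * L + 1) * ((Suc K * L choose L) * K^(K*L))"
    by (rule pow_le_mode)
  also have "\<dots> \<le> (Suc K * L + 1) * ((Suc K * L choose L) * (\<Prod>m\<in>{1..K}. (m*L+1) * (m*L choose L)))"
    using Suc.IH by (intro mult_le_mono2) simp
  also have "\<dots> = (\<Prod>m\<in>{1..Suc K}. (m*L+1) * (m*L choose L))"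
  proof -
    define f where "f m = (m*L+1) * (m*L choose L)" for m
    have "prod f {1..Suc K} = prod f {1..K} * f (Suc K)" by (simp add: prod.cl_ivl_Suc)
    then show ?thesis unfolding f_def by (simp only: mult_ac)
  qed
  finally show ?case .
qed

lemma prod_upper: "(\<Prod>m\<in>{1..K}. (m*L choose L)) \<le> K^(K*L)" for K L :: nat
proof (induction K)
  case 0 then show ?case by simp
next
  case (Suc K)
  have "(\<Prod>m\<in>{1..Suc K}. (m*L choose L)) = (Suc K * L choose L) * (\<Prod>m\<in>{1..K}. (m*L choose L))"
    by (simp add: prod.cl_ivl_Suc)
  also have "\<dots> \<le> (Suc K * L choose L) * K^(K*L)"
    using Suc.IH by (intro mult_le_mono2)
  also have "\<dots> \<le> (Suc K)^(Suc K * L)"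
    using binom_term_le[of "Suc K" "Suc K * L" L] by simp
  finally show ?case .
qed




lemma card_avoid:
  fixes X A :: "'a set" and M x :: nat
  assumes "finite X" "A \<subseteq> X" "x < M"
  shows "real (card {c \<in> PiE X (\<lambda>_. {..<M}). \<forall>y\<in>A. c y \<noteq> x}) = real M ^ card X * (1 - 1 / real M) ^ card A"
proof -
  have "{c \<in> PiE X (\<lambda>_. {..<M}). \<forall>y\<in>A. c y \<noteq> x} = PiE X (\<lambda>y. if y \<in> A then {..<M} - {x} else {..<M})"
    using assms(2) by (auto simp: PiE_def Pi_def split: if_splits)
  then have "card {c \<in> PiE X (\<lambda>_. {..<M}). \<forall>y\<in>A. c y \<noteq> x} = (\<Prod>y\<in>X. if y \<in> A then M - 1 else M)"
    using assms by (simp add: card_PiE if_distrib cong: if_cong)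
  also have "\<dots> = (M-1) ^ card A * M ^ card (X - A)"
    using assms by (simp add: prod.If_cases Int_absorb1 Diff_eq[symmetric] Int_absorb2)
  finally have e: "real (card {c \<in> PiE X (\<lambda>_. {..<M}). \<forall>y\<in>A. c y \<noteq> x}) = (real M - 1) ^ card A * real M ^ card (X - A)"
    using assms(3) by (simp add: of_nat_diff)
  have cX: "card X = card A + card (X - A)"
    using assms by (metis card_Diff_subset card_mono finite_subset le_add_diff_inverse)
  have M0: "real M > 0" using assms by simp
  have "(real M - 1) ^ card A = real M ^ card A * (1 - 1 / real M) ^ card A"
    using M0 by (simp add: power_mult_distrib[symmetric] field_simps)
  then show ?thesis unfolding e cX by (simp add: power_add)
qed

lemma polychrom:
  fixes X :: "'a set" and Fam :: "'a set set" and M D :: nat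
  assumes finX: "finite X" and FamX: "\<forall>A\<in>Fam. A \<subseteq> X" and finF: "finite Fam"
    and cardD: "\<forall>A\<in>Fam. card A \<ge> D" and M: "M > 0"
    and small: "real (card Fam) * real M * (1 - 1 / real M) ^ D < 1"
  shows "\<exists>c. \<forall>A\<in>Fam. \<forall>x<M. \<exists>y\<in>A. c y = x"
proof -
  define Fun where "Fun = PiE X (\<lambda>_. {..<M})"
  define B where "B A x = {c \<in> Fun. \<forall>y\<in>A. c y \<noteq> x}" for A x
  define Bad where "Bad = (\<Union>A\<in>Fam. \<Union>x\<in>{..<M}. B A x)"
  have q01: "0 \<le> 1 - 1 / real M" "1 - 1 / real M \<le> 1" using M by auto
  have c1: "card Bad \<le> (\<Sum>A\<in>Fam. card (\<Union>x\<in>{..<M}. B A x))"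
    unfolding Bad_def by (rule card_UN_le[OF finF])
  have c2: "card (\<Union>x\<in>{..<M}. B A x) \<le> (\<Sum>x\<in>{..<M}. card (B A x))" for A
    by (rule card_UN_le) simp
  have c3: "real (card (B A x)) \<le> real M ^ card X * (1 - 1 / real M) ^ D" if A: "A \<in> Fam" and x: "x < M" for A x
  proof -
    have "real (card (B A x)) = real M ^ card X * (1 - 1 / real M) ^ card A"
      unfolding B_def Fun_def using card_avoid[OF finX _ x] A FamX by auto
    also have "\<dots> \<le> real M ^ card X * (1 - 1 / real M) ^ D"
      using cardD A q01 by (intro mult_left_mono power_decreasing) auto
    finally show ?thesis .
  qed
  have "card Bad \<le> (\<Sum>A\<in>Fam. (\<Sum>x\<in>{..<M}. card (B A x)))"
    using c1 c2 by (meson order_trans sum_mono)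
  then have "real (card Bad) \<le> (\<Sum>A\<in>Fam. (\<Sum>x\<in>{..<M}. real (card (B A x))))"
    by (simp only: of_nat_le_iff of_nat_sum[symmetric])
  also have "\<dots> \<le> (\<Sum>A\<in>Fam. (\<Sum>x\<in>{..<M}. real M ^ card X * (1 - 1 / real M) ^ D))"
    using c3 by (intro sum_mono) auto
  also have "\<dots> = real M ^ card X * (real (card Fam) * real M * (1 - 1 / real M) ^ D)"
    by (simp add: algebra_simps)
  also have "\<dots> < real M ^ card X"
    using small M by simp
  also have "\<dots> = real (card Fun)"
    unfolding Fun_def using finX by (simp add: card_PiE)
  finally have lt: "card Bad < card Fun" by simp
  have "\<not> Fun \<subseteq> Bad"
  proof
    assume "Fun \<subseteq> Bad"
    moreover have "finite Bad" unfolding Bad_def B_def Fun_def using finF finX by (auto intro!: finite_PiE)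
    ultimately have "card Fun \<le> card Bad" by (rule card_mono[rotated])
    with lt show False by simp
  qed
  then obtain c where c: "c \<in> Fun" "c \<notin> Bad" by blast
  show ?thesis
  proof (intro exI ballI allI impI)
    fix A x assume "A \<in> Fam" "x < M"
    then show "\<exists>y\<in>A. c y = x" using c unfolding Bad_def B_def by auto
  qed
qed

lemma exp_bound: "4 ^ b * exp (- (2 * real b + 2)) < (1::real)"
proof -
  have e1: "exp (1::real) \<ge> 2" using exp_ge_add_one_self[of 1] by simp
  have "exp (2::real) = exp 1 * exp 1" using exp_add[of 1 1] by simp
  also have "\<dots> \<ge> 2 * 2" using mult_mono[OF e1 e1] by simp
  finally have e2: "exp (2::real) \<ge> 4" by simp
  have "exp (2 * real b + 2) = exp 2 ^ (b + 1)"
    using exp_of_nat_mult[of "b+1" 2] by (simp add: algebra_simps)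
  also have "\<dots> \<ge> 4 ^ (b+1)" using e2 by (intro power_mono) auto
  finally have a: "exp (2 * real b + 2) \<ge> 4 ^ (b+1)" .
  have "(4::real) ^ b < 4 ^ (b+1)" by simp
  with a have "4 ^ b < exp (2 * real b + 2)" by linarith
  then have "4 ^ b * exp (- (2 * real b + 2)) < exp (2 * real b + 2) * exp (- (2 * real b + 2))"
    by (intro mult_strict_right_mono) auto
  also have "\<dots> = 1" by (simp flip: exp_add)
  finally show ?thesis .
qed




definition Mf :: "nat \<Rightarrow> nat \<Rightarrow> nat \<Rightarrow> nat" where
  "Mf b f L = max 1 ((f choose L) div (2 * (b + 1)))"

lemma stage_coloring:
  fixes b f L :: nat
  assumes Lf: "L \<le> f" and fb: "f \<le> b"
  shows "\<exists>c. \<forall>F. F \<subseteq> {..<b} \<longrightarrow> card F = f \<longrightarrow>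
            (\<forall>x < Mf b f L. \<exists>S. S \<subseteq> F \<and> card S = L \<and> c S = x)"
proof -
  define X where "X = {S. S \<subseteq> {..<b} \<and> card S = L}"
  define Fam where "Fam = (\<lambda>F. {S. S \<subseteq> F \<and> card S = L}) ` {F. F \<subseteq> {..<b} \<and> card F = f}"
  define D where "D = f choose L"
  define M where "M = Mf b f L"
  have M0: "M > 0" unfolding M_def Mf_def by simp
  have D1: "D \<ge> 1" unfolding D_def using Lf by (simp add: Suc_le_eq)
  have finX: "finite X" unfolding X_def by (rule finite_subset[of _ "Pow {..<b}"]) auto
  have FamX: "\<forall>A\<in>Fam. A \<subseteq> X" unfolding Fam_def X_def by auto
  have finF: "finite Fam" unfolding Fam_def by (rule finite_imageI, rule finite_subset[of _ "Pow {..<b}"]) auto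
  have cardF: "card Fam \<le> 2 ^ b"
  proof -
    have "card Fam \<le> card {F. F \<subseteq> {..<b} \<and> card F = f}" unfolding Fam_def by (rule card_image_le) (rule finite_subset[of _ "Pow {..<b}"], auto)
    also have "\<dots> \<le> card (Pow {..<b})" by (rule card_mono) auto
    also have "\<dots> = 2 ^ b" by (simp add: card_Pow)
    finally show ?thesis .
  qed
  have cardA: "\<forall>A\<in>Fam. card A \<ge> D"
  proof
    fix A assume "A \<in> Fam"
    then obtain F where F: "F \<subseteq> {..<b}" "card F = f" and A: "A = {S. S \<subseteq> F \<and> card S = L}" unfolding Fam_def by auto
    have "finite F" using F(1) finite_subset by blast
    then show "card A \<ge> D" unfolding A D_def using n_subsets[of F L] F by simp
  qed
  have small: "real (card Fam) * real M * (1 - 1 / real M) ^ D < 1"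
  proof (cases "D div (2 * (b+1)) = 0")
    case True
    then have "M = 1" unfolding M_def Mf_def D_def by simp
    then show ?thesis using D1 by (simp add: power_0_left)
  next
    case False
    then have Mq: "M = D div (2 * (b+1))" unfolding M_def Mf_def D_def by simp
    have "M * (2 * (b+1)) \<le> D" unfolding Mq by (rule div_times_less_eq_dividend)
    then have "real (M * (2 * (b+1))) \<le> real D" by (simp only: of_nat_le_iff)
    moreover have "real (M * (2 * (b+1))) = real M * (2 * real b + 2)" by (simp add: algebra_simps)
    ultimately have "real M * (2 * real b + 2) \<le> real D" by simp
    then have DM: "real D / real M \<ge> 2 * real b + 2" using M0
      by (simp add: field_simps)
    have MD: "M \<le> D" unfolding Mq by simp
    have "D \<le> 2 ^ f" unfolding D_def by (rule binomial_le_pow2)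
    also have "(2::nat) ^ f \<le> 2 ^ b" using fb by (intro power_increasing) auto
    finally have Db: "D \<le> 2 ^ b" .
    have ex: "1 - 1 / real M \<le> exp (- 1 / real M)"
      using exp_ge_add_one_self[of "- 1 / real M"] by simp
    have "(1 - 1 / real M) ^ D \<le> exp (- 1 / real M) ^ D"
      using M0 ex by (intro power_mono) (auto simp: field_simps)
    also have "\<dots> = exp (- (real D / real M))" by (simp add: exp_of_nat_mult[symmetric])
    also have "\<dots> \<le> exp (- (2 * real b + 2))" using DM by simp
    finally have p: "(1 - 1 / real M) ^ D \<le> exp (- (2 * real b + 2))" .
    have "card Fam * M \<le> 2 ^ b * 2 ^ b"
      using cardF MD Db by (intro mult_le_mono) auto
    then have "real (card Fam * M) \<le> real (2 ^ b * 2 ^ b)" by (simp only: of_nat_le_iff)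
    then have "real (card Fam) * real M \<le> 2 ^ b * 2 ^ b" by simp
    also have "\<dots> = (4::real) ^ b" by (simp flip: power_mult_distrib)
    finally have q: "real (card Fam) * real M \<le> 4 ^ b" .
    have "real (card Fam) * real M * (1 - 1 / real M) ^ D \<le> 4 ^ b * exp (- (2 * real b + 2))"
      using p q M0 by (intro mult_mono) (auto simp: field_simps)
    also have "\<dots> < 1" by (rule exp_bound)
    finally show ?thesis .
  qed
  obtain c where c: "\<forall>A\<in>Fam. \<forall>x<M. \<exists>y\<in>A. c y = x"
    using polychrom[OF finX FamX finF cardA M0 small] by blast
  show ?thesis
  proof (rule exI[of _ c], intro allI impI)
    fix F x assume F: "F \<subseteq> {..<b}" "card F = f" and x: "x < Mf b f L"
    have "{S. S \<subseteq> F \<and> card S = L} \<in> Fam" unfolding Fam_def using F by auto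
    then show "\<exists>S. S \<subseteq> F \<and> card S = L \<and> c S = x" using c x unfolding M_def by auto
  qed
qed




lemma succ_fill:
  fixes k L b :: nat and cs :: "nat \<Rightarrow> nat set \<Rightarrow> nat" and \<sigma> d :: "nat \<Rightarrow> nat"
  assumes cs: "\<forall>s<k. \<forall>F. F \<subseteq> {..<b} \<longrightarrow> card F = (k-s)*L \<longrightarrow>
                 (\<forall>x < Mf b ((k-s)*L) L. \<exists>S. S \<subseteq> F \<and> card S = L \<and> cs s S = x)"
    and inj: "inj_on \<sigma> {..<k}"
    and d: "\<forall>s<k. d s < Mf b ((k-s)*L) L"
  shows "m \<le> k \<Longrightarrow> F \<subseteq> {..<b} \<Longrightarrow> card F = m*L \<Longrightarrow>
    \<exists>g. (\<forall>t\<in>F. \<exists>s. k-m \<le> s \<and> s<k \<and> g t = \<sigma> s) \<and> (\<forall>s. k-m \<le> s \<longrightarrow> s<k \<longrightarrow> cs s {t\<in>F. g t = \<sigma> s} = d s)"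
proof (induction m arbitrary: F)
  case 0
  then have "F = {}" by (metis card_0_eq finite_lessThan finite_subset mult_0)
  then show ?case by (intro exI[of _ "\<lambda>_. 0"]) auto
next
  case (Suc m)
  define s0 where "s0 = k - Suc m"
  have s0k: "s0 < k" using Suc.prems unfolding s0_def by simp
  have ks0: "(k - s0) * L = Suc m * L" using Suc.prems unfolding s0_def by simp
  have ds0: "d s0 < Mf b ((k - s0) * L) L" using d s0k by simp
  have cF: "card F = (k - s0) * L" using Suc.prems(3) ks0 by simp
  obtain S where S: "S \<subseteq> F" "card S = L" "cs s0 S = d s0"
    using cs[rule_format, OF s0k Suc.prems(2) cF ds0] by auto
  have finF: "finite F" using Suc.prems(2) finite_subset by blast
  have cF': "card (F - S) = m * L" using S Suc.prems(3) finF by (simp add: card_Diff_subset finite_subset)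
  obtain g where g1: "\<forall>t\<in>F - S. \<exists>s. k-m \<le> s \<and> s<k \<and> g t = \<sigma> s"
      and g2: "\<forall>s. k-m \<le> s \<longrightarrow> s<k \<longrightarrow> cs s {t\<in>F - S. g t = \<sigma> s} = d s"
    using Suc.IH[of "F - S"] Suc.prems cF' by auto
  define g' where "g' t = (if t \<in> S then \<sigma> s0 else g t)" for t
  have km: "k - Suc m \<le> k - m" "k - m = Suc s0" using Suc.prems unfolding s0_def by auto
  have notS: "g t \<noteq> \<sigma> s0" if tFS: "t \<in> F - S" for t
  proof -
    obtain s where s: "k-m \<le> s" "s<k" "g t = \<sigma> s" using g1 tFS by auto
    then have "s \<noteq> s0" using km by simp
    then show ?thesis using inj s s0k by (metis inj_on_def lessThan_iff)
  qed
  show ?case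
  proof (rule exI[of _ g'], intro conjI ballI allI impI)
    fix t assume t: "t \<in> F"
    show "\<exists>s. k - Suc m \<le> s \<and> s < k \<and> g' t = \<sigma> s"
    proof (cases "t \<in> S")
      case True then show ?thesis using s0k unfolding g'_def s0_def by auto
    next
      case False then obtain s where "k-m \<le> s" "s<k" "g t = \<sigma> s" using g1 t by auto
      then show ?thesis using False km unfolding g'_def by (intro exI[of _ s]) auto
    qed
  next
    fix s assume s: "k - Suc m \<le> s" "s < k"
    show "cs s {t \<in> F. g' t = \<sigma> s} = d s"
    proof (cases "s = s0")
      case True
      have "{t \<in> F. g' t = \<sigma> s} = S" using S(1) notS True unfolding g'_def by auto
      then show ?thesis using S True by simp
    next
      case False
      then have "k - m \<le> s" using s km unfolding s0_def by linarith
      have "\<sigma> s \<noteq> \<sigma> s0" using False inj s s0k by (metis inj_on_def lessThan_iff)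
      then have "{t \<in> F. g' t = \<sigma> s} = {t\<in>F - S. g t = \<sigma> s}" unfolding g'_def by auto
      then show ?thesis using g2 \<open>k - m \<le> s\<close> s by simp
    qed
  qed
qed




lemma Mf_le: "L \<le> f \<Longrightarrow> Mf b f L \<le> f choose L"
  unfolding Mf_def using zero_less_binomial_iff[of f L]
  by (metis One_nat_def Suc_leI div_le_dividend max.bounded_iff not_le)

lemma Mf_ge: "real (f choose L) / (4 * (real b + 1)) \<le> real (Mf b f L)"
proof -
  define C where "C = f choose L"
  define d where "d = 2 * (b + 1)"
  have d0: "d > 0" unfolding d_def by simp
  have Cd: "C < (C div d + 1) * d" using d0 by (metis div_mult_mod_eq mod_less_divisor add_mult_distrib mult_1 add_less_cancel_left)
  show ?thesis
  proof (cases "C div d = 0")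
    case True
    then have "Mf b f L = 1" unfolding Mf_def C_def d_def by simp
    moreover have "real C < real d" using Cd True by simp
    ultimately show ?thesis unfolding C_def[symmetric] d_def by (simp add: field_simps)
  next
    case False
    then have "Mf b f L = C div d" unfolding Mf_def C_def d_def by simp
    moreover have "(C div d + 1) * d \<le> 2 * (C div d) * d" using False by (intro mult_le_mono1) simp
    then have "C < 2 * (C div d) * d" using Cd by linarith
    then have "real C < 2 * real (C div d) * real d" by (metis of_nat_less_iff of_nat_mult of_nat_numeral)
    ultimately show ?thesis unfolding C_def[symmetric] d_def by (simp add: field_simps)
  qed
qed

lemma prod_rev: "(\<Prod>s<k. g (k - s)) = (\<Prod>m\<in>{1..k}. g m)" for g :: "nat \<Rightarrow> 'a::comm_monoid_mult"
proof (induction k)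
  case 0 then show ?case by simp
next
  case (Suc k)
  have "(\<Prod>s<Suc k. g (Suc k - s)) = g (Suc k - 0) * (\<Prod>s<k. g (Suc k - Suc s))"
    by (rule prod.lessThan_Suc_shift)
  also have "\<dots> = g (Suc k) * (\<Prod>s<k. g (Suc k - Suc s))" by simp
  also have "\<dots> = g (Suc k) * (\<Prod>m\<in>{1..k}. g m)" using Suc by simp
  also have "\<dots> = (\<Prod>m\<in>{1..Suc k}. g m)" by (simp add: prod.cl_ivl_Suc mult.commute)
  finally show ?case .
qed

definition PP :: "nat \<Rightarrow> nat \<Rightarrow> nat" where
  "PP k L = (\<Prod>s<k. Mf (k*L) ((k-s)*L) L)"

lemma PP_pos: "PP k L > 0"
  unfolding PP_def Mf_def by (auto intro!: prod_pos simp: less_max_iff_disj)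

lemma PP_upper: "PP k L \<le> k^(k*L)"
proof -
  have "PP k L \<le> (\<Prod>s<k. ((k-s)*L choose L))"
    unfolding PP_def by (intro prod_mono) (auto intro!: Mf_le)
  also have "\<dots> = (\<Prod>m\<in>{1..k}. (m*L choose L))" by (rule prod_rev[where g = "\<lambda>m. m*L choose L"])
  also have "\<dots> \<le> k^(k*L)" by (rule prod_upper)
  finally show ?thesis .
qed

lemma PP_lower: "real k^(k*L) / (4*(real (k*L)+1))^(2*k) \<le> real (PP k L)"
proof -
  define c where "c = 4*(real (k*L)+1)"
  have c1: "c \<ge> 1" unfolding c_def by simp
  define Q where "Q = (\<Prod>m\<in>{1..k}. (m*L choose L))"
  have "k^(k*L) \<le> (\<Prod>m\<in>{1..k}. (m*L+1) * (m*L choose L))" by (rule prod_lower)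
  also have "\<dots> = (\<Prod>m\<in>{1..k}. (m*L+1)) * Q" unfolding Q_def by (simp only: prod.distrib)
  finally have "real k^(k*L) \<le> real (\<Prod>m\<in>{1..k}. (m*L+1)) * real Q" by (metis of_nat_le_iff of_nat_mult of_nat_power)
  also have "real (\<Prod>m\<in>{1..k}. (m*L+1)) \<le> (\<Prod>m\<in>{1..k}. c)"
  proof -
    have "real (m*L) \<le> real (k*L)" if "m \<le> k" for m using that by (simp only: of_nat_le_iff) simp
    then have "real (m*L + 1) \<le> 4 * (real (k*L) + 1)" if "m \<in> {1..k}" for m
      using that by (simp only: of_nat_add of_nat_1) (smt (verit) atLeastAtMost_iff of_nat_0_le_iff)
    then show ?thesis unfolding of_nat_prod c_def by (intro prod_mono) auto
  qed
  also have "\<dots> = c ^ k" by simp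
  finally have kQ: "real k^(k*L) \<le> c ^ k * real Q" by (simp add: mult_right_mono)
  have "real (PP k L) = (\<Prod>s<k. real (Mf (k*L) ((k-s)*L) L))" unfolding PP_def by simp
  also have "\<dots> \<ge> (\<Prod>s<k. real ((k-s)*L choose L) / c)"
    unfolding c_def using Mf_ge[of _ L "k*L"] by (intro prod_mono) (auto simp del: of_nat_mult)
  finally have "real (PP k L) \<ge> (\<Prod>s<k. real ((k-s)*L choose L)) / c ^ k"
    by (simp add: prod_dividef)
  moreover have "(\<Prod>s<k. real ((k-s)*L choose L)) = real Q"
    unfolding Q_def of_nat_prod by (rule prod_rev[where g = "\<lambda>m. real (m*L choose L)"])
  ultimately have PQ: "real (PP k L) \<ge> real Q / c ^ k" by simp
  have "real k^(k*L) / c^(2*k) \<le> c ^ k * real Q / c^(2*k)"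
    using kQ c1 by (intro divide_right_mono) auto
  also have "\<dots> = real Q / c ^ k" using c1 by (simp add: field_simps flip: power_add mult_2)
  also have "\<dots> \<le> real (PP k L)" using PQ .
  finally show ?thesis unfolding c_def .
qed




lemma lim_log_over: "(\<lambda>n. log 2 (4*(real n+1)) / real n) \<longlonglongrightarrow> 0"
  by real_asymp

lemma lim_inv: "(\<lambda>n. 1 / real n) \<longlonglongrightarrow> 0"
  by real_asymp

lemma lim_lo: "(\<lambda>n. x - y * (1 / real n) - z * (log 2 (4*(real n+1)) / real n)) \<longlonglongrightarrow> (x::real)"
proof -
  have "(\<lambda>n. x - y * (1 / real n) - z * (log 2 (4*(real n+1)) / real n)) \<longlonglongrightarrow> x - y * 0 - z * 0"
    by (intro tendsto_intros lim_log_over lim_inv)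
  then show ?thesis by simp
qed



lemma rot_inj: "inj_on (\<lambda>s. (r + s) mod k) {..<(k::nat)}"
proof (rule inj_onI)
  fix s s' assume s: "s \<in> {..<k}" "s' \<in> {..<k}" and e: "(r + s) mod k = (r + s') mod k"
  have "int s mod int k = int s' mod int k"
  proof -
    have "(int r + int s) mod int k = (int r + int s') mod int k" using e by (metis of_nat_add of_nat_mod)
    then have "int k dvd (int r + int s) - (int r + int s')" by (simp only: mod_eq_dvd_iff)
    then have "int k dvd int s - int s'" by simp
    then show ?thesis by (simp only: mod_eq_dvd_iff)
  qed
  then show "s = s'" using s by simp
qed

lemma rot_hit: "i < k \<Longrightarrow> s < k \<Longrightarrow> ((i + k - s) mod k + s) mod k = (i::nat)"
  by (simp add: mod_add_left_eq)




lemma colorings_exist: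
  "\<exists>cs. \<forall>s<k. \<forall>F. F \<subseteq> {..<k*L} \<longrightarrow> card F = (k-s)*L \<longrightarrow>
      (\<forall>x < Mf (k*L) ((k-s)*L) L. \<exists>S. S \<subseteq> F \<and> card S = L \<and> cs s S = x)"
proof -
  have "\<forall>s. \<exists>c. s < k \<longrightarrow> (\<forall>F. F \<subseteq> {..<k*L} \<longrightarrow> card F = (k-s)*L \<longrightarrow>
      (\<forall>x < Mf (k*L) ((k-s)*L) L. \<exists>S. S \<subseteq> F \<and> card S = L \<and> c S = x))"
  proof
    fix s
    show "\<exists>c. s < k \<longrightarrow> (\<forall>F. F \<subseteq> {..<k*L} \<longrightarrow> card F = (k-s)*L \<longrightarrow>
      (\<forall>x < Mf (k*L) ((k-s)*L) L. \<exists>S. S \<subseteq> F \<and> card S = L \<and> c S = x))"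
    proof (cases "s < k")
      case True
      have "1 \<le> k - s" using True by simp
      then have "1 * L \<le> (k-s)*L" by (rule mult_le_mono1)
      then have "L \<le> (k-s)*L" by simp
      moreover have "(k-s)*L \<le> k*L" by simp
      ultimately show ?thesis using stage_coloring[of L "(k-s)*L" "k*L"] by blast
    next
      case False then show ?thesis by blast
    qed
  qed
  then show ?thesis by (metis (no_types))
qed

lemma block_word:
  fixes cs :: "nat \<Rightarrow> nat set \<Rightarrow> nat" and \<sigma> d :: "nat \<Rightarrow> nat"
  assumes cs: "\<forall>s<k. \<forall>F. F \<subseteq> {..<k*L} \<longrightarrow> card F = (k-s)*L \<longrightarrow>
                 (\<forall>x < Mf (k*L) ((k-s)*L) L. \<exists>S. S \<subseteq> F \<and> card S = L \<and> cs s S = x)"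
    and inj: "inj_on \<sigma> {..<k}" and rng: "\<forall>s<k. \<sigma> s < k"
    and d: "\<forall>s<k. d s < Mf (k*L) ((k-s)*L) L"
  shows "\<exists>w. w \<in> words {..<k} (k*L) \<and> (\<forall>s<k. cs s {t. t < k*L \<and> w!t = \<sigma> s} = d s)"
proof -
  obtain g where g1: "\<forall>t\<in>{..<k*L}. \<exists>s. k-k \<le> s \<and> s<k \<and> g t = \<sigma> s"
      and g2: "\<forall>s. k-k \<le> s \<longrightarrow> s<k \<longrightarrow> cs s {t\<in>{..<k*L}. g t = \<sigma> s} = d s"
    using succ_fill[OF cs inj d, of k "{..<k*L}"] by auto
  define w where "w = map g [0..<k*L]"
  have "set w \<subseteq> {..<k}"
  proof
    fix x assume "x \<in> set w"
    then obtain t where t: "t < k*L" "x = g t" unfolding w_def by auto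
    then obtain s where "s < k" "g t = \<sigma> s" using g1 by auto
    then show "x \<in> {..<k}" using t rng by auto
  qed
  then have "w \<in> words {..<k} (k*L)"
    unfolding words_def w_def by simp
  moreover have "cs s {t. t < k*L \<and> w!t = \<sigma> s} = d s" if "s < k" for s
  proof -
    have "{t. t < k*L \<and> w!t = \<sigma> s} = {t\<in>{..<k*L}. g t = \<sigma> s}" unfolding w_def by auto
    then show ?thesis using g2 that by simp
  qed
  ultimately show ?thesis by blast
qed




lemma aux_lt: "r < k \<Longrightarrow> t < b \<Longrightarrow> r*b + t < k*(b::nat)"
proof -
  assume r: "r < k" and t: "t < b"
  have "r*b + t < r*b + b" using t by simp
  also have "\<dots> = Suc r * b" by simp
  also have "\<dots> \<le> k*b" using r by (intro mult_le_mono1) simp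
  finally show ?thesis .
qed

lemma feas:
  fixes k n :: nat
  assumes k0: "k > 0"
  shows "feasible_vector {..<k} k
           (\<lambda>i a b. a \<noteq> b \<and> a \<noteq> i \<and> b \<noteq> i \<and> a \<in> {..<k} \<and> b \<in> {..<k})
           n (\<lambda>i. PP k (n div (k*k)))"
proof -
  define L where "L = n div (k*k)"
  define b where "b = k*L"
  define P where "P = PP k L"
  define Mn where "Mn = (\<lambda>i::nat. P)"
  have "k * b = n div (k*k) * (k*k)" unfolding b_def L_def by (simp only: ac_simps)
  then have kb: "k * b \<le> n" by (simp only: div_times_less_eq_dividend)
  obtain cs where cs: "\<forall>s<k. \<forall>F. F \<subseteq> {..<k*L} \<longrightarrow> card F = (k-s)*L \<longrightarrow>
      (\<forall>x < Mf (k*L) ((k-s)*L) L. \<exists>S. S \<subseteq> F \<and> card S = L \<and> cs s S = x)"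
    using colorings_exist by blast
  define Pi where "Pi = PiE {..<k} (\<lambda>s. {..<Mf (k*L) ((k-s)*L) L})"
  have finPi: "finite Pi" unfolding Pi_def by (simp add: finite_PiE)
  have cardPi: "card Pi = P" unfolding Pi_def P_def PP_def by (simp add: card_PiE)
  obtain h where h: "bij_betw h Pi {0..<card Pi}" using ex_bij_betw_finite_nat[OF finPi] by blast
  define \<beta> where "\<beta> = inv_into Pi h"
  have \<beta>: "bij_betw \<beta> {0..<P} Pi" unfolding \<beta>_def using bij_betw_inv_into[OF h] cardPi by simp
  define blk where "blk a r = (SOME w. w \<in> words {..<k} (k*L) \<and>
      (\<forall>s<k. cs s {t. t < k*L \<and> w!t = (r+s) mod k} = \<beta> (a ((r+s) mod k)) s))" for a :: "nat \<Rightarrow> nat" and r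
  have blk: "blk a r \<in> words {..<k} (k*L) \<and>
      (\<forall>s<k. cs s {t. t < k*L \<and> blk a r!t = (r+s) mod k} = \<beta> (a ((r+s) mod k)) s)"
    if a: "a \<in> tuples k Mn" and r: "r < k" for a r
  proof -
    have d: "\<forall>s<k. \<beta> (a ((r+s) mod k)) s < Mf (k*L) ((k-s)*L) L"
    proof (intro allI impI)
      fix s assume s: "s < k"
      have "(r+s) mod k < k" using k0 by simp
      then have "a ((r+s) mod k) \<in> {0..<P}" using a unfolding tuples_def Mn_def by auto
      then have "\<beta> (a ((r+s) mod k)) \<in> Pi" using \<beta> by (meson bij_betwE)
      then show "\<beta> (a ((r+s) mod k)) s < Mf (k*L) ((k-s)*L) L" unfolding Pi_def using s by auto
    qed
    have rng: "\<forall>s<k. (r+s) mod k < k" using k0 by simp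
    show ?thesis unfolding blk_def
      by (rule someI_ex[OF block_word[OF cs rot_inj rng d]])
  qed
  define E where "E a = map (\<lambda>p. if p < k*b then blk a (p div b) ! (p mod b) else 0) [0..<n]" for a
  have Enth: "E a ! (r*b + t) = blk a r ! t" if "r < k" "t < b" for a r t
  proof -
    have "r*b + t < k*b" using that by (rule aux_lt)
    moreover have "(r*b+t) div b = r" "(r*b+t) mod b = t" using that by auto
    ultimately show ?thesis unfolding E_def using kb by (simp add: nth_map_upt)
  qed
  have Ewords: "E a \<in> words {..<k} n" if a: "a \<in> tuples k Mn" for a
  proof -
    have "x \<in> {..<k}" if x: "x \<in> set (E a)" for x
    proof -
      obtain p where p: "p < n" "x = (if p < k*b then blk a (p div b) ! (p mod b) else 0)"
        using x unfolding E_def by auto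
      show ?thesis
      proof (cases "p < k*b")
        case True
        then have b0: "b > 0" by (cases "b = 0") auto
        have r: "p div b < k" using True b0 by (simp add: div_less_iff_less_mult mult.commute)
        have "blk a (p div b) \<in> words {..<k} b" using blk[OF a r] unfolding b_def by simp
        moreover have "p mod b < b" using b0 by simp
        ultimately have w: "length (blk a (p div b)) = b" "set (blk a (p div b)) \<subseteq> {..<k}" "p mod b < b"
          unfolding words_def by auto
        then have m: "blk a (p div b) ! (p mod b) \<in> set (blk a (p div b))" by (intro nth_mem) simp
        have "blk a (p div b) ! (p mod b) \<in> {..<k}" using m w(2) by blast
        then show ?thesis using p(2) True by simp
      next
        case False then show ?thesis using p k0 by simp
      qed
    qed
    then show ?thesis unfolding words_def E_def by auto
  qed
  have dist: "distinguishable (\<lambda>a b. a \<noteq> b \<and> a \<noteq> i \<and> b \<noteq> i \<and> a \<in> {..<k} \<and> b \<in> {..<k}) (E a) (E a')"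
    if i: "i < k" and a: "a \<in> tuples k Mn" and a': "a' \<in> tuples k Mn" and ne: "a i \<noteq> a' i" for i a a'
  proof -
    have ai: "a i \<in> {0..<P}" "a' i \<in> {0..<P}" using a a' i unfolding tuples_def Mn_def by auto
    then have "\<beta> (a i) \<noteq> \<beta> (a' i)" using \<beta> ne ai unfolding bij_betw_def inj_on_def by blast
    moreover have "\<beta> (a i) \<in> Pi" "\<beta> (a' i) \<in> Pi" using \<beta> ai by (meson bij_betwE)+
    moreover have "\<exists>s<k. \<beta> (a i) s \<noteq> \<beta> (a' i) s"
    proof (rule ccontr)
      assume "\<not> (\<exists>s<k. \<beta> (a i) s \<noteq> \<beta> (a' i) s)"
      then have "\<And>s. s \<in> {..<k} \<Longrightarrow> \<beta> (a i) s = \<beta> (a' i) s" by auto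
      then have "\<beta> (a i) = \<beta> (a' i)"
        using PiE_ext[of "\<beta> (a i)" "{..<k}" "\<lambda>s. {..<Mf (k*L) ((k-s)*L) L}" "\<beta> (a' i)"] calculation(2,3)
        unfolding Pi_def by blast
      then show False using calculation(1) by simp
    qed
    then obtain s where s: "s < k" "\<beta> (a i) s \<noteq> \<beta> (a' i) s" by blast
    define r where "r = (i + k - s) mod k"
    have r: "r < k" unfolding r_def using k0 by simp
    have rs: "(r + s) mod k = i" unfolding r_def using rot_hit[OF i s(1)] .
    have "cs s {t. t < k*L \<and> blk a r!t = i} = \<beta> (a i) s" using blk[OF a r] s(1) rs by auto
    moreover have "cs s {t. t < k*L \<and> blk a' r!t = i} = \<beta> (a' i) s" using blk[OF a' r] s(1) rs by auto
    ultimately have "{t. t < k*L \<and> blk a r!t = i} \<noteq> {t. t < k*L \<and> blk a' r!t = i}" using s(2) by force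
    then obtain t where t: "t < b" "(blk a r ! t = i) \<noteq> (blk a' r ! t = i)" unfolding b_def by blast
    define p where "p = r*b + t"
    have pn: "p < n"
    proof -
      have "p < k*b" unfolding p_def using r t(1) by (rule aux_lt)
      then show ?thesis using kb by simp
    qed
    have "E a ! p = blk a r ! t" "E a' ! p = blk a' r ! t" unfolding p_def using Enth r t(1) by auto
    moreover have "length (E a) = n" "length (E a') = n" unfolding E_def by auto
    ultimately show ?thesis unfolding distinguishable_def using pn t(2) by (intro exI[of _ p]) auto
  qed
  show ?thesis unfolding feasible_vector_def
  proof (intro conjI allI impI exI[of _ E] ballI)
    fix i assume "i < k" then show "0 < PP k (n div (k*k))" using PP_pos by blast
  qed (use Ewords dist in \<open>auto simp: Mn_def P_def L_def\<close>)
qed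




lemma PP_log_upper:
  fixes k n :: nat assumes k0: "k > 0" and n0: "n > 0"
  shows "log 2 (real (PP k (n div (k*k)))) / real n \<le> log 2 (real k) / real k"
proof -
  define L where "L = n div (k*k)"
  have lk: "log 2 (real k) \<ge> 0" using k0 by simp
  have P0: "real (PP k L) > 0" using PP_pos by simp
  have le: "real (PP k L) \<le> real k ^ (k*L)" using PP_upper[of k L] by (metis of_nat_le_iff of_nat_power)
  have "log 2 (real (PP k L)) \<le> log 2 (real k ^ (k*L))" using P0 le by (subst log_le_cancel_iff) auto
  also have "\<dots> = real (k*L) * log 2 (real k)" using k0 by (simp add: log_nat_power)
  finally have a: "log 2 (real (PP k L)) \<le> real (k*L) * log 2 (real k)" .
  have "k * k * L \<le> n" unfolding L_def by (metis div_times_less_eq_dividend mult.commute)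
  then have "real k * (real k * real L) \<le> real n" by (metis of_nat_le_iff of_nat_mult mult.assoc)
  then have "(real k * (real k * real L)) * log 2 (real k) \<le> real n * log 2 (real k)"
    by (rule mult_right_mono[OF _ lk])
  then have "real (k*L) * log 2 (real k) * real k \<le> real n * log 2 (real k)"
    by (simp add: algebra_simps)
  then have "real (k*L) * log 2 (real k) / real n \<le> log 2 (real k) / real k"
    using k0 n0 by (simp add: field_simps)
  with a n0 show ?thesis unfolding L_def by (smt (verit) divide_right_mono of_nat_0_le_iff)
qed

lemma PP_log_lower:
  fixes k n :: nat assumes k0: "k > 0" and n0: "n > 0"
  shows "log 2 (real k) / real k - (real k * log 2 (real k)) * (1 / real n)
           - (2 * real k) * (log 2 (4*(real n+1)) / real n)
         \<le> log 2 (real (PP k (n div (k*k)))) / real n"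
proof -
  define L where "L = n div (k*k)"
  define c where "c = 4*(real (k*L)+1)"
  have c1: "c \<ge> 1" unfolding c_def by simp
  have lk: "log 2 (real k) \<ge> 0" using k0 by simp
  have kk: "(real k)^(k*L) > 0" using k0 by simp
  have P0: "real (PP k L) > 0" using PP_pos by simp
  have "real k^(k*L) / c^(2*k) \<le> real (PP k L)" unfolding c_def by (rule PP_lower)
  then have "log 2 (real k^(k*L) / c^(2*k)) \<le> log 2 (real (PP k L))"
    using kk c1 PP_pos[of k L] by (subst log_le_cancel_iff) auto
  moreover have "log 2 (real k^(k*L) / c^(2*k)) = real (k*L) * log 2 (real k) - real (2*k) * log 2 c"
    using kk c1 k0 by (simp add: log_divide log_nat_power)
  ultimately have a: "real (k*L) * log 2 (real k) - real (2*k) * log 2 c \<le> log 2 (real (PP k L))" by simp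
  have "k * L \<le> n"
  proof -
    have "k*L \<le> k*k*L" using k0 by simp
    also have "\<dots> \<le> n" unfolding L_def by (metis div_times_less_eq_dividend mult.commute)
    finally show ?thesis .
  qed
  then have "c \<le> 4*(real n+1)" unfolding c_def by (metis add_le_cancel_right mult_le_cancel_left_pos of_nat_le_iff zero_less_numeral)
  then have lc: "log 2 c \<le> log 2 (4*(real n+1))" using c1 by simp
  have "n < (L+1)*(k*k)" unfolding L_def using k0 by (metis add.commute div_mult_mod_eq mod_less_divisor mult_pos_pos add_less_cancel_left distrib_right mult_1)
  then have "real n < (real L + 1) * (real k * real k)" by (metis of_nat_less_iff of_nat_mult of_nat_add of_nat_1)
  then have Lb: "real n / (real k * real k) - 1 \<le> real L" using k0 by (simp add: field_simps)
  have "(real n / real k - real k) * log 2 (real k) \<le> real (k*L) * log 2 (real k)"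
  proof (rule mult_right_mono[OF _ lk])
    have "real n / real k - real k = real k * (real n / (real k * real k) - 1)" using k0 by (simp add: field_simps)
    also have "\<dots> \<le> real k * real L" using Lb by (intro mult_left_mono) auto
    finally show "real n / real k - real k \<le> real (k*L)" by simp
  qed
  with a lc have b: "(real n / real k - real k) * log 2 (real k) - real (2*k) * log 2 (4*(real n+1)) \<le> log 2 (real (PP k L))"
    by (smt (verit) mult_left_mono of_nat_0_le_iff)
  have "log 2 (real k) / real k - (real k * log 2 (real k)) * (1 / real n)
           - (2 * real k) * (log 2 (4*(real n+1)) / real n)
        = ((real n / real k - real k) * log 2 (real k) - real (2*k) * log 2 (4*(real n+1))) / real n"
    using k0 n0 by (simp add: field_simps)
  also have "\<dots> \<le> log 2 (real (PP k L)) / real n" using b n0 by (simp add: divide_right_mono)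
  finally show ?thesis unfolding L_def .
qed

lemma PP_lim:
  fixes k :: nat assumes k0: "k > 0"
  shows "(\<lambda>n. log 2 (real (PP k (n div (k*k)))) / real n) \<longlonglongrightarrow> log 2 (real k) / real k"
proof (rule tendsto_sandwich[OF _ _ lim_lo tendsto_const])
  show "\<forall>\<^sub>F n in sequentially. log 2 (real k) / real k - (real k * log 2 (real k)) * (1 / real n)
           - (2 * real k) * (log 2 (4*(real n+1)) / real n) \<le> log 2 (real (PP k (n div (k*k)))) / real n"
    unfolding eventually_sequentially by (intro exI[of _ 1] allI impI PP_log_lower[OF k0]) auto
  show "\<forall>\<^sub>F n in sequentially. log 2 (real (PP k (n div (k*k)))) / real n \<le> log 2 (real k) / real k"
    unfolding eventually_sequentially by (intro exI[of _ 1] allI impI PP_log_upper[OF k0]) auto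
qed



theorem corollary6:
  fixes k :: nat
  assumes "k \<ge> 3"
  shows "feasible_rate {..<k} k
           (\<lambda>i a b. a \<noteq> b \<and> a \<noteq> i \<and> b \<noteq> i \<and> a \<in> {..<k} \<and> b \<in> {..<k})
           (\<lambda>i. log 2 (real k) / real k)"
proof -
  have k0: "k > 0" using assms by simp
  define M where "M = (\<lambda>n::nat. \<lambda>i::nat. PP k (n div (k*k)))"
  have f: "\<forall>n. feasible_vector {..<k} k
           (\<lambda>i a b. a \<noteq> b \<and> a \<noteq> i \<and> b \<noteq> i \<and> a \<in> {..<k} \<and> b \<in> {..<k}) n (M n)"
    unfolding M_def using feas[OF k0] by blast
  have l: "\<forall>i<k. (\<lambda>n. log 2 (real (M n i)) / real n) \<longlonglongrightarrow> log 2 (real k) / real k"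
    unfolding M_def using PP_lim[OF k0] by simp
  show ?thesis unfolding feasible_rate_def using f l by blast
qed

end
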